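(* Let $n,k,d$ be integers with $1\le k\le d<n$, let $\alpha>0$, and let $i$ be an integer with $1\le i\le k$. Then $$C^{\mathrm{exact}}_{n,k,d}\left(\alpha,\frac{(d-k+i)\alpha}{d-k+1}\right)\ \ge\ \frac{n i\alpha}{n-k+i}.$$
   Context: A distributed storage system (DSS) with parameters $(n,k,d)$ stores a file across $n$ nodes, each storing an amount $\alpha$ of information (e.g. $\alpha$ symbols over a finite field, where symbols may be split into arbitrarily many sub-symbols), such that the file can be reconstructed from the contents of any $k$ nodes, and any lost node can be repaired by contacting any $d$ of the remaining nodes, each of which transmits an amount $\beta$ to the replacement node, for a total repair bandwidth $\gamma=d\beta$. Repair is exact: the replacement node stores exactly the same content as the lost node. $C^{\mathrm{exact}}_{n,k,d}(\alpha,\gamma)$ denotes the maximum size of a file that can be stored by such an exact-repair DSS with $n$ nodes, node size $\alpha$ and total repair bandwidth $\gamma$. *)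

theory Defs
  imports Complex_Main "HOL-Library.Extended_Real" "HOL-Computational_Algebra.Primes"
begin

(* Vectors of length m over an alphabet {0..<q} of size q (the symbols of GF(q)). *)
definition vecs :: "nat \<Rightarrow> nat \<Rightarrow> nat list set" where
  "vecs q m = {xs. length xs = m \<and> set xs \<subseteq> {..<q}}"

(* An exact-repair DSS with n nodes over GF(q) (q a prime power): the file is a vector of
   B symbols; node j < n stores enc j file, a vector of a symbols; any k nodes determine
   the file; any lost node l can be exactly repaired from any d other nodes, each sending
   b symbols computed from its own stored content only. *)
definition exact_dss ::
  "nat \<Rightarrow> nat \<Rightarrow> nat \<Rightarrow> nat \<Rightarrow> nat \<Rightarrow> nat \<Rightarrow> nat \<Rightarrow> (nat \<Rightarrow> nat list \<Rightarrow> nat list) \<Rightarrow> bool" where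
  "exact_dss n k d q B a b enc \<longleftrightarrow>
     (\<forall>j<n. \<forall>f\<in>vecs q B. enc j f \<in> vecs q a) \<and>
     (\<forall>K. K \<subseteq> {..<n} \<and> card K = k \<longrightarrow>
        (\<forall>f1\<in>vecs q B. \<forall>f2\<in>vecs q B. (\<forall>j\<in>K. enc j f1 = enc j f2) \<longrightarrow> f1 = f2)) \<and>
     (\<forall>l<n. \<forall>H. H \<subseteq> {..<n} - {l} \<and> card H = d \<longrightarrow>
        (\<exists>msg :: nat \<Rightarrow> nat list \<Rightarrow> nat list.
           (\<forall>j\<in>H. \<forall>c\<in>vecs q a. msg j c \<in> vecs q b) \<and>
           (\<forall>f1\<in>vecs q B. \<forall>f2\<in>vecs q B.
              (\<forall>j\<in>H. msg j (enc j f1) = msg j (enc j f2)) \<longrightarrow> enc l f1 = enc l f2)))"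

(* Capacity: supremum of the normalized file size B/L over all prime powers q,
   sub-packetization levels L \<ge> 1 (each symbol split into L sub-symbols), and exact-repair
   DSSs storing at most alpha*L sub-symbols per node with total repair bandwidth at most
   gamma*L sub-symbols (d helpers, each sending b \<le> (gamma/d)*L sub-symbols). *)
definition C_exact :: "nat \<Rightarrow> nat \<Rightarrow> nat \<Rightarrow> real \<Rightarrow> real \<Rightarrow> ereal" where
  "C_exact n k d \<alpha> \<gamma> = Sup {ereal (real B / real L) | B L q a b enc.
      L \<ge> 1 \<and> (\<exists>p m. prime p \<and> m \<ge> 1 \<and> q = p ^ m) \<and>
      real a \<le> \<alpha> * real L \<and> real d * real b \<le> \<gamma> * real L \<and>
      exact_dss n k d q B a b enc}"

end

theory Submission
  imports Defs "HOL-Computational_Algebra.Polynomial" "HOL-Library.FuncSet" "HOL-Combinatorics.Permutations"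
begin


lemma vander_zero:
  fixes x y :: "'m \<Rightarrow> int" and p :: int
  assumes fin: "finite M" and pr: "prime p" and cM: "card M \<le> r"
    and dist: "\<And>m m'. m \<in> M \<Longrightarrow> m' \<in> M \<Longrightarrow> m \<noteq> m' \<Longrightarrow> \<not> p dvd (x m - x m')"
    and eq: "\<And>t. t < r \<Longrightarrow> p dvd (\<Sum>m\<in>M. x m ^ t * y m)"
    and mm: "mm \<in> M"
  shows "p dvd y mm"
proof -
  define P where "P = (\<Prod>m\<in>M-{mm}. [:- x m, 1:])"
  have degP: "degree P = card M - 1"
    unfolding P_def using fin mm by (subst degree_prod_eq_sum_degree) (auto simp: card_Diff_singleton)
  have "card M > 0" using fin mm card_gt_0_iff by blast
  then have degr: "degree P < r" using degP cM by linarith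
  have polyP: "poly P z = (\<Prod>m\<in>M-{mm}. z - x m)" for z
    unfolding P_def by (simp add: poly_prod)
  have "(\<Sum>t\<le>degree P. coeff P t * (\<Sum>m\<in>M. x m ^ t * y m)) = (\<Sum>m\<in>M. y m * poly P (x m))"
    by (simp add: poly_altdef sum_distrib_left sum_distrib_right mult_ac) (rule sum.swap)
  also have "\<dots> = y mm * poly P (x mm)"
  proof (rule sum.remove[OF fin mm, THEN trans])
    have "(\<Sum>m\<in>M-{mm}. y m * poly P (x m)) = 0"
      using fin by (intro sum.neutral) (auto simp: polyP intro!: prod_zero)
    then show "y mm * poly P (x mm) + (\<Sum>m\<in>M - {mm}. y m * poly P (x m)) = y mm * poly P (x mm)" by simp
  qed
  finally have e: "(\<Sum>t\<le>degree P. coeff P t * (\<Sum>m\<in>M. x m ^ t * y m)) = y mm * poly P (x mm)" .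
  have "p dvd (\<Sum>t\<le>degree P. coeff P t * (\<Sum>m\<in>M. x m ^ t * y m))"
    using degr by (auto intro!: dvd_sum dvd_mult eq)
  then have "p dvd y mm * poly P (x mm)" using e by simp
  moreover have "\<not> p dvd poly P (x mm)"
    unfolding polyP using fin pr dist mm by (subst prime_dvd_prod_iff) auto
  ultimately show ?thesis using pr by (simp add: prime_dvd_mult_iff)
qed


lemma small_dvd_eq:
  fixes a b :: nat assumes "a < p" "b < p" "int p dvd (int a - int b)" shows "a = b"
proof -
  have "int a - int b = 0"
  proof (rule ccontr)
    assume ne: "int a - int b \<noteq> 0"
    have "\<bar>int p\<bar> \<le> \<bar>int a - int b\<bar>" using dvd_imp_le_int[OF ne assms(3)] .
    then show False using assms(1,2) by linarith
  qed
  then show ?thesis by simp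
qed

lemma vander_exists:
  fixes w :: "'m \<Rightarrow> int" and g :: "nat \<Rightarrow> int" and p :: nat
  assumes fin: "finite M" and pr: "prime p" and cM: "card M = r"
    and dist: "\<And>m m'. m \<in> M \<Longrightarrow> m' \<in> M \<Longrightarrow> m \<noteq> m' \<Longrightarrow> \<not> int p dvd (w m - w m')"
  shows "\<exists>z. (\<forall>m\<in>M. z m < p) \<and> (\<forall>t<r. int p dvd ((\<Sum>m\<in>M. w m ^ t * int (z m)) + g t))"
proof -
  have p0: "p > 0" using pr prime_gt_0_nat by blast
  define Dom where "Dom = PiE M (\<lambda>_. {..<p})"
  define Cod where "Cod = PiE {..<r} (\<lambda>_. {..<p})"
  define \<Phi> where "\<Phi> z = restrict (\<lambda>t. nat ((\<Sum>m\<in>M. w m ^ t * int (z m)) mod int p)) {..<r}" for z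
  have inj: "inj_on \<Phi> Dom"
  proof (rule inj_onI)
    fix z1 z2 assume z1: "z1 \<in> Dom" and z2: "z2 \<in> Dom" and e: "\<Phi> z1 = \<Phi> z2"
    have "int p dvd (\<Sum>m\<in>M. w m ^ t * (int (z1 m) - int (z2 m)))" if t: "t < r" for t
    proof -
      have "nat ((\<Sum>m\<in>M. w m ^ t * int (z1 m)) mod int p) = nat ((\<Sum>m\<in>M. w m ^ t * int (z2 m)) mod int p)"
        using fun_cong[OF e, of t] t by (simp add: \<Phi>_def)
      then have "(\<Sum>m\<in>M. w m ^ t * int (z1 m)) mod int p = (\<Sum>m\<in>M. w m ^ t * int (z2 m)) mod int p"
        using p0 by (simp add: nat_eq_iff2)
      then have "int p dvd (\<Sum>m\<in>M. w m ^ t * int (z1 m)) - (\<Sum>m\<in>M. w m ^ t * int (z2 m))"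
        by (simp add: mod_eq_dvd_iff)
      then show ?thesis by (simp add: sum_subtractf right_diff_distrib)
    qed
    then have "int p dvd (int (z1 m) - int (z2 m))" if "m \<in> M" for m
      using that by (intro vander_zero[where x=w and y="\<lambda>m. int (z1 m) - int (z2 m)" and r=r and M=M and p="int p"])
        (auto simp: fin pr cM dist)
    then have "z1 m = z2 m" if "m \<in> M" for m
      using that z1 z2 small_dvd_eq unfolding Dom_def by (meson PiE_mem lessThan_iff)
    then show "z1 = z2" using z1 z2 unfolding Dom_def by (auto intro: PiE_ext)
  qed
  have sub: "\<Phi> ` Dom \<subseteq> Cod"
    unfolding Cod_def \<Phi>_def using p0
    by (auto simp: PiE_iff nat_less_iff split: if_splits)
  have cards: "card (\<Phi> ` Dom) = card Cod"
    using inj fin cM by (simp add: card_image Dom_def Cod_def card_PiE)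
  have eq: "\<Phi> ` Dom = Cod"
    using card_subset_eq[OF _ sub cards] unfolding Cod_def by (simp add: finite_PiE)
  define tg where "tg = restrict (\<lambda>t. nat ((- g t) mod int p)) {..<r}"
  have "tg \<in> Cod" unfolding tg_def Cod_def using p0 by (auto simp: nat_less_iff)
  then obtain z where z: "z \<in> Dom" "\<Phi> z = tg" using eq by blast
  have "int p dvd ((\<Sum>m\<in>M. w m ^ t * int (z m)) + g t)" if t: "t < r" for t
  proof -
    have "nat ((\<Sum>m\<in>M. w m ^ t * int (z m)) mod int p) = nat ((- g t) mod int p)"
      using fun_cong[OF z(2), of t] t by (simp add: \<Phi>_def tg_def)
    then have "(\<Sum>m\<in>M. w m ^ t * int (z m)) mod int p = (- g t) mod int p"
      using p0 by (simp add: nat_eq_iff2)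
    then have "int p dvd (\<Sum>m\<in>M. w m ^ t * int (z m)) - (- g t)"
      by (simp add: mod_eq_dvd_iff)
    then show ?thesis by simp
  qed
  moreover have "\<forall>m\<in>M. z m < p" using z(1) unfolding Dom_def by auto
  ultimately show ?thesis by blast
qed


lemma card_vecs: "card (vecs q m) = q ^ m"
  unfolding vecs_def using card_lists_length_eq[of "{..<q}" m] by (simp add: conj_commute)

lemma finite_vecs: "finite (vecs q m)"
  unfolding vecs_def using finite_lists_length_eq[of "{..<q}" m] by (simp add: conj_commute)

lemma replicate_vecs: "q \<ge> 1 \<Longrightarrow> replicate m 0 \<in> vecs q m"
  unfolding vecs_def by auto

lemma inj_into_vecs:
  assumes "finite S" "card S \<le> q ^ m"
  shows "\<exists>f. f ` S \<subseteq> vecs q m \<and> inj_on f S"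
  using card_le_inj[OF assms(1) finite_vecs] assms(2) by (simp add: card_vecs)

lemma conv:
  fixes E :: "nat \<Rightarrow> 'f \<Rightarrow> 'c" and e :: "nat list \<Rightarrow> 'f"
  assumes q1: "q \<ge> 1" and finFS: "finite FS"
    and einj: "inj_on e (vecs q B)" and eim: "e ` vecs q B \<subseteq> FS"
    and stor: "\<And>j. j < n \<Longrightarrow> card (E j ` FS) \<le> q ^ a"
    and dec: "\<And>K x y. K \<subseteq> {..<n} \<Longrightarrow> card K = k \<Longrightarrow> x \<in> FS \<Longrightarrow> y \<in> FS \<Longrightarrow>
               (\<forall>j\<in>K. E j x = E j y) \<Longrightarrow> x = y"
    and rep: "\<And>l H. l < n \<Longrightarrow> H \<subseteq> {..<n} - {l} \<Longrightarrow> card H = d \<Longrightarrow>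
       \<exists>msg :: nat \<Rightarrow> 'c \<Rightarrow> 'm. (\<forall>j\<in>H. card (msg j ` E j ` FS) \<le> q ^ b) \<and>
         (\<forall>x\<in>FS. \<forall>y\<in>FS. (\<forall>j\<in>H. msg j (E j x) = msg j (E j y)) \<longrightarrow> E l x = E l y)"
  shows "\<exists>enc. exact_dss n k d q B a b enc"
proof -
  have "\<forall>j. \<exists>f. j < n \<longrightarrow> f ` (E j ` FS) \<subseteq> vecs q a \<and> inj_on f (E j ` FS)"
  proof
    fix j show "\<exists>f. j < n \<longrightarrow> f ` (E j ` FS) \<subseteq> vecs q a \<and> inj_on f (E j ` FS)"
    proof (cases "j < n")
      case True then show ?thesis using inj_into_vecs[OF finite_imageI[OF finFS] stor[OF True]] by blast
    qed simp
  qed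
  from choice[OF this] obtain \<iota> where \<iota>': "\<forall>j. j < n \<longrightarrow> \<iota> j ` (E j ` FS) \<subseteq> vecs q a \<and> inj_on (\<iota> j) (E j ` FS)"
    by blast
  have \<iota>: "\<And>j. j < n \<Longrightarrow> \<iota> j ` (E j ` FS) \<subseteq> vecs q a \<and> inj_on (\<iota> j) (E j ` FS)"
    using \<iota>' by blast
  define enc where "enc j f = \<iota> j (E j (e f))" for j f
  have encv: "\<forall>j<n. \<forall>f\<in>vecs q B. enc j f \<in> vecs q a"
  proof (intro allI impI ballI)
    fix j f assume j: "j < n" and f: "f \<in> vecs q B"
    have "e f \<in> FS" using eim f by (rule subsetD[OF _ imageI])
    then have "E j (e f) \<in> E j ` FS" by (rule imageI)
    then show "enc j f \<in> vecs q a" unfolding enc_def using \<iota>[OF j] by (meson image_subset_iff)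
  qed
  have encE: "enc j f1 = enc j f2 \<longleftrightarrow> E j (e f1) = E j (e f2)" if "j < n" "f1 \<in> vecs q B" "f2 \<in> vecs q B" for j f1 f2
  proof -
    have "e f1 \<in> FS" "e f2 \<in> FS" using eim that(2,3) by (auto intro: subsetD[OF _ imageI])
    then have "E j (e f1) \<in> E j ` FS" "E j (e f2) \<in> E j ` FS" by auto
    then show ?thesis using \<iota>[OF that(1)] unfolding enc_def inj_on_def by metis
  qed
  have decd: "\<forall>K. K \<subseteq> {..<n} \<and> card K = k \<longrightarrow>
        (\<forall>f1\<in>vecs q B. \<forall>f2\<in>vecs q B. (\<forall>j\<in>K. enc j f1 = enc j f2) \<longrightarrow> f1 = f2)"
  proof (intro allI impI ballI)
    fix K f1 f2 assume K: "K \<subseteq> {..<n} \<and> card K = k" and f: "f1 \<in> vecs q B" "f2 \<in> vecs q B"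
      and ag: "\<forall>j\<in>K. enc j f1 = enc j f2"
    have "\<forall>j\<in>K. E j (e f1) = E j (e f2)" using ag encE K f by blast
    then have "e f1 = e f2" using dec[of K "e f1" "e f2"] K f eim by blast
    then show "f1 = f2" using einj f by (meson inj_onD)
  qed
  have repd: "\<forall>l<n. \<forall>H. H \<subseteq> {..<n} - {l} \<and> card H = d \<longrightarrow>
        (\<exists>msg :: nat \<Rightarrow> nat list \<Rightarrow> nat list.
           (\<forall>j\<in>H. \<forall>c\<in>vecs q a. msg j c \<in> vecs q b) \<and>
           (\<forall>f1\<in>vecs q B. \<forall>f2\<in>vecs q B.
              (\<forall>j\<in>H. msg j (enc j f1) = msg j (enc j f2)) \<longrightarrow> enc l f1 = enc l f2))"
  proof (intro allI impI)
    fix l H assume l: "l < n" and H: "H \<subseteq> {..<n} - {l} \<and> card H = d"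
    obtain msg :: "nat \<Rightarrow> 'c \<Rightarrow> 'm" where m1: "\<forall>j\<in>H. card (msg j ` E j ` FS) \<le> q ^ b"
      and m2: "\<forall>x\<in>FS. \<forall>y\<in>FS. (\<forall>j\<in>H. msg j (E j x) = msg j (E j y)) \<longrightarrow> E l x = E l y"
      using rep[OF l] H by blast
    have "\<forall>j. \<exists>f. j \<in> H \<longrightarrow> f ` (msg j ` E j ` FS) \<subseteq> vecs q b \<and> inj_on f (msg j ` E j ` FS)"
    proof
      fix j show "\<exists>f. j \<in> H \<longrightarrow> f ` (msg j ` E j ` FS) \<subseteq> vecs q b \<and> inj_on f (msg j ` E j ` FS)"
      proof (cases "j \<in> H")
        case True then show ?thesis
          using inj_into_vecs[OF finite_imageI[OF finite_imageI[OF finFS]]] m1 by blast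
      qed simp
    qed
    from choice[OF this] obtain \<kappa> where \<kappa>': "\<forall>j. j \<in> H \<longrightarrow> \<kappa> j ` (msg j ` E j ` FS) \<subseteq> vecs q b \<and> inj_on (\<kappa> j) (msg j ` E j ` FS)"
      by blast
    have \<kappa>: "\<And>j. j \<in> H \<Longrightarrow> \<kappa> j ` (msg j ` E j ` FS) \<subseteq> vecs q b \<and> inj_on (\<kappa> j) (msg j ` E j ` FS)"
      using \<kappa>' by blast
    define msg' where "msg' j c = (if c \<in> \<iota> j ` E j ` FS then \<kappa> j (msg j (the_inv_into (E j ` FS) (\<iota> j) c))
                                  else replicate b 0)" for j c
    have Hn: "j \<in> H \<Longrightarrow> j < n" for j using H by auto
    have msgenc: "msg' j (enc j f) = \<kappa> j (msg j (E j (e f)))" if "j \<in> H" "f \<in> vecs q B" for j f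
    proof -
      have "E j (e f) \<in> E j ` FS" using eim that by blast
      then show ?thesis unfolding msg'_def enc_def using \<iota>[OF Hn[OF that(1)]]
        by (simp add: the_inv_into_f_f)
    qed
    show "\<exists>msg :: nat \<Rightarrow> nat list \<Rightarrow> nat list.
           (\<forall>j\<in>H. \<forall>c\<in>vecs q a. msg j c \<in> vecs q b) \<and>
           (\<forall>f1\<in>vecs q B. \<forall>f2\<in>vecs q B.
              (\<forall>j\<in>H. msg j (enc j f1) = msg j (enc j f2)) \<longrightarrow> enc l f1 = enc l f2)"
    proof (intro exI conjI ballI impI)
      fix j c assume j: "j \<in> H" and c: "c \<in> vecs q a"
      show "msg' j c \<in> vecs q b"
      proof (cases "c \<in> \<iota> j ` E j ` FS")
        case True
        then have "the_inv_into (E j ` FS) (\<iota> j) c \<in> E j ` FS"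
          using \<iota>[OF Hn[OF j]] by (simp add: the_inv_into_into)
        then have "msg j (the_inv_into (E j ` FS) (\<iota> j) c) \<in> msg j ` E j ` FS" by (rule imageI)
        then have "\<kappa> j (msg j (the_inv_into (E j ` FS) (\<iota> j) c)) \<in> vecs q b"
          using \<kappa>[OF j] by (meson image_subset_iff)
        then show ?thesis using True unfolding msg'_def by simp
      next
        case False then show ?thesis unfolding msg'_def using replicate_vecs q1 by simp
      qed
    next
      fix f1 f2 assume f: "f1 \<in> vecs q B" "f2 \<in> vecs q B"
        and ag: "\<forall>j\<in>H. msg' j (enc j f1) = msg' j (enc j f2)"
      have "\<forall>j\<in>H. msg j (E j (e f1)) = msg j (E j (e f2))"
      proof
        fix j assume j: "j \<in> H"
        have "\<kappa> j (msg j (E j (e f1))) = \<kappa> j (msg j (E j (e f2)))"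
          using ag j msgenc[OF j f(1)] msgenc[OF j f(2)] by simp
        moreover have "msg j (E j (e f1)) \<in> msg j ` E j ` FS" "msg j (E j (e f2)) \<in> msg j ` E j ` FS"
          using f eim by (auto intro: subsetD[OF _ imageI])
        ultimately show "msg j (E j (e f1)) = msg j (E j (e f2))"
          using \<kappa>[OF j] by (meson inj_onD)
      qed
      moreover have "e f1 \<in> FS" "e f2 \<in> FS" using f eim by (auto intro: subsetD[OF _ imageI])
      ultimately have "E l (e f1) = E l (e f2)" using m2 by blast
      then show "enc l f1 = enc l f2" unfolding enc_def by simp
    qed
  qed
  show ?thesis unfolding exact_dss_def using encv decd repd by blast
qed


abbreviation "Perms n \<equiv> {\<pi>. \<pi> permutes {..<(n::nat)}}"

lemma sum_perm_transpose:
  fixes f :: "(nat \<Rightarrow> nat) \<Rightarrow> 'a::comm_monoid_add"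
  assumes "j < n" "j' < n"
  shows "(\<Sum>\<pi>\<in>Perms n. f (\<pi> \<circ> transpose j j')) = (\<Sum>\<pi>\<in>Perms n. f \<pi>)"
proof (rule sum.reindex_bij_witness[where i="\<lambda>\<pi>. \<pi> \<circ> transpose j j'" and j="\<lambda>\<pi>. \<pi> \<circ> transpose j j'"])
  have t: "transpose j j' permutes {..<n}" using assms by (simp add: permutes_swap_id)
  show "\<And>a. a \<in> Perms n \<Longrightarrow> a \<circ> transpose j j' \<circ> transpose j j' = a"
    by (simp add: o_assoc[symmetric])
  show "\<And>a. a \<in> Perms n \<Longrightarrow> a \<circ> transpose j j' \<in> Perms n"
    using t by (simp add: permutes_compose)
  show "\<And>a. a \<in> Perms n \<Longrightarrow> a \<circ> transpose j j' \<circ> transpose j j' = a"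
    by (simp add: o_assoc[symmetric])
  show "\<And>a. a \<in> Perms n \<Longrightarrow> a \<circ> transpose j j' \<in> Perms n"
    using t by (simp add: permutes_compose)
  show "\<And>a. a \<in> Perms n \<Longrightarrow> f (a \<circ> transpose j j') = f (a \<circ> transpose j j')" by simp
qed

lemma sum_perm_point:
  fixes f :: "nat \<Rightarrow> nat"
  assumes j: "j < n"
  shows "(\<Sum>\<pi>\<in>Perms n. f (\<pi> j)) = fact (n - 1) * (\<Sum>y<n. f y)"
proof -
  define S where "S = (\<Sum>\<pi>\<in>Perms n. f (\<pi> j))"
  have eqj: "(\<Sum>\<pi>\<in>Perms n. f (\<pi> j')) = S" if "j' < n" for j'
  proof -
    have "(\<Sum>\<pi>\<in>Perms n. f (\<pi> j')) = (\<Sum>\<pi>\<in>Perms n. f ((\<pi> \<circ> transpose j j') j))"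
      by simp
    also have "\<dots> = S" unfolding S_def
      using sum_perm_transpose[OF j that, of "\<lambda>\<pi>. f (\<pi> j)"] by simp
    finally show ?thesis .
  qed
  have "n * S = (\<Sum>j'<n. (\<Sum>\<pi>\<in>Perms n. f (\<pi> j')))" using eqj by simp
  also have "\<dots> = (\<Sum>\<pi>\<in>Perms n. \<Sum>j'<n. f (\<pi> j'))" by (rule sum.swap)
  also have "\<dots> = (\<Sum>\<pi>\<in>Perms n. \<Sum>y<n. f y)"
  proof (rule sum.cong[OF refl])
    fix \<pi> assume "\<pi> \<in> Perms n"
    then have "bij_betw \<pi> {..<n} {..<n}" by (simp add: permutes_imp_bij)
    then show "(\<Sum>j'<n. f (\<pi> j')) = (\<Sum>y<n. f y)" by (rule sum.reindex_bij_betw)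
  qed
  also have "\<dots> = fact n * (\<Sum>y<n. f y)" by (simp add: card_permutations)
  also have "\<dots> = n * (fact (n - 1) * (\<Sum>y<n. f y))"
    using j by (metis Suc_pred' fact_Suc gr_implies_not0 mult.assoc neq0_conv of_nat_id)
  finally show ?thesis unfolding S_def using j by simp
qed

lemma sum_I_fst:
  fixes g :: "(nat \<Rightarrow> nat) \<Rightarrow> nat"
  shows "(\<Sum>z\<in>Perms n \<times> {..<m}. g (fst z)) = m * (\<Sum>\<pi>\<in>Perms n. g \<pi>)"
proof -
  have "(\<Sum>z\<in>Perms n \<times> {..<m}. g (fst z)) = (\<Sum>z\<in>Perms n \<times> {..<m}. (\<lambda>(x,y). g x) z)"
    by (rule sum.cong) auto
  also have "\<dots> = (\<Sum>x\<in>Perms n. \<Sum>y<m. g x)" by (rule sum.cartesian_product[symmetric])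
  also have "\<dots> = m * (\<Sum>\<pi>\<in>Perms n. g \<pi>)" by (simp add: sum_distrib_left)
  finally show ?thesis .
qed

lemma card_PiE_le_pow:
  fixes F :: "'i \<Rightarrow> 'x set" and s :: "'i \<Rightarrow> nat"
  assumes "finite I" "\<And>z. z \<in> I \<Longrightarrow> card (F z) \<le> q ^ s z"
  shows "card (PiE I F) \<le> q ^ (\<Sum>z\<in>I. s z)"
proof -
  have "card (PiE I F) = (\<Prod>z\<in>I. card (F z))" by (rule card_PiE[OF assms(1)])
  also have "\<dots> \<le> (\<Prod>z\<in>I. q ^ s z)" by (rule prod_mono) (use assms(2) in auto)
  also have "\<dots> = q ^ (\<Sum>z\<in>I. s z)" by (simp add: power_sum)
  finally show ?thesis .
qed

lemma symm:
  fixes BE :: "nat \<Rightarrow> 'f \<Rightarrow> 'c" and Bmsg :: "nat \<Rightarrow> nat set \<Rightarrow> nat \<Rightarrow> 'c \<Rightarrow> 'm"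
    and asz T :: "nat \<Rightarrow> nat" and bsz :: "nat \<Rightarrow> nat set \<Rightarrow> nat \<Rightarrow> nat"
  assumes q1: "q \<ge> 1" and d1: "d \<ge> 1" and finFB: "finite FB"
    and cFB: "q ^ Bb \<le> card FB"
    and bstor: "\<And>y. y < n \<Longrightarrow> card (BE y ` FB) \<le> q ^ asz y"
    and bdec: "\<And>K x y. K \<subseteq> {..<n} \<Longrightarrow> card K = k \<Longrightarrow> x \<in> FB \<Longrightarrow> y \<in> FB \<Longrightarrow>
                 (\<forall>j\<in>K. BE j x = BE j y) \<Longrightarrow> x = y"
    and brep1: "\<And>l H j. l < n \<Longrightarrow> H \<subseteq> {..<n} - {l} \<Longrightarrow> card H = d \<Longrightarrow> j \<in> H \<Longrightarrow>
                 card (Bmsg l H j ` BE j ` FB) \<le> q ^ bsz l H j"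
    and brep2: "\<And>l H. l < n \<Longrightarrow> H \<subseteq> {..<n} - {l} \<Longrightarrow> card H = d \<Longrightarrow> (\<Sum>j\<in>H. bsz l H j) = T l"
    and brep3: "\<And>l H x y. l < n \<Longrightarrow> H \<subseteq> {..<n} - {l} \<Longrightarrow> card H = d \<Longrightarrow> x \<in> FB \<Longrightarrow> y \<in> FB \<Longrightarrow>
                 (\<forall>j\<in>H. Bmsg l H j (BE j x) = Bmsg l H j (BE j y)) \<Longrightarrow> BE l x = BE l y"
  shows "\<exists>enc. exact_dss n k d q (m * fact n * Bb) (m * fact (n - 1) * (\<Sum>y<n. asz y))
            ((m * fact (n - 1) * (\<Sum>y<n. T y)) div d) enc"
proof -
  define I where "I = Perms n \<times> {..<m}"
  define FS where "FS = PiE I (\<lambda>_. FB)"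
  define E where "E j x = (\<lambda>z\<in>I. BE (fst z j) (x z))" for j x
  have finI: "finite I" unfolding I_def by (simp add: finite_permutations)
  have cardI: "card I = fact n * m" unfolding I_def by (simp add: card_cartesian_product card_permutations)
  have finFS: "finite FS" unfolding FS_def using finI finFB by (simp add: finite_PiE)
  have pin: "fst z y < n" if "z \<in> I" "y < n" for z y
  proof -
    have "fst z permutes {..<n}" using that unfolding I_def by auto
    then show ?thesis using permutes_in_image[of "fst z" "{..<n}" y] that(2) by simp
  qed
  have cFS: "card (vecs q (m * fact n * Bb)) \<le> card FS"
  proof -
    have "card (vecs q (m * fact n * Bb)) = (q ^ Bb) ^ (fact n * m)"
      by (simp add: card_vecs power_mult[symmetric] mult_ac)
    also have "\<dots> \<le> card FB ^ (fact n * m)" by (rule power_mono[OF cFB]) simp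
    also have "\<dots> = card FS" unfolding FS_def using finI cardI by (simp add: card_PiE)
    finally show ?thesis .
  qed
  obtain e where e: "e ` vecs q (m * fact n * Bb) \<subseteq> FS" "inj_on e (vecs q (m * fact n * Bb))"
    using card_le_inj[OF finite_vecs finFS cFS] by blast
  show ?thesis
  proof (rule conv[OF q1 finFS e(2) e(1), where E=E])
    fix j assume j: "j < n"
    have "E j ` FS \<subseteq> PiE I (\<lambda>z. BE (fst z j) ` FB)"
      unfolding E_def FS_def by (auto simp: PiE_iff)
    then have "card (E j ` FS) \<le> card (PiE I (\<lambda>z. BE (fst z j) ` FB))"
      by (rule card_mono[rotated]) (simp add: finI finFB finite_PiE)
    also have "\<dots> \<le> q ^ (\<Sum>z\<in>I. asz (fst z j))"
      by (rule card_PiE_le_pow[OF finI]) (use bstor pin j in auto)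
    also have "(\<Sum>z\<in>I. asz (fst z j)) = m * fact (n - 1) * (\<Sum>y<n. asz y)"
      unfolding I_def using sum_I_fst[of "\<lambda>\<pi>. asz (\<pi> j)"] sum_perm_point[OF j, of asz] by simp
    finally show "card (E j ` FS) \<le> q ^ (m * fact (n - 1) * (\<Sum>y<n. asz y))" .
  next
    fix K x y assume K: "K \<subseteq> {..<n}" "card K = k" and xy: "x \<in> FS" "y \<in> FS"
      and ag: "\<forall>j\<in>K. E j x = E j y"
    have "x z = y z" if z: "z \<in> I" for z
    proof -
      have pz: "fst z permutes {..<n}" using z unfolding I_def by auto
      have "fst z ` K \<subseteq> {..<n}" using K permutes_in_image[OF pz] by auto
      moreover have "card (fst z ` K) = k" using K pz by (simp add: card_image permutes_inj_on)
      moreover have "\<forall>j'\<in>fst z ` K. BE j' (x z) = BE j' (y z)"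
      proof
        fix j' assume "j' \<in> fst z ` K"
        then obtain j where "j \<in> K" "j' = fst z j" by blast
        then show "BE j' (x z) = BE j' (y z)" using fun_cong[OF ag[rule_format, OF \<open>j \<in> K\<close>], of z] z
          unfolding E_def by simp
      qed
      moreover have "x z \<in> FB" "y z \<in> FB" using xy z unfolding FS_def by auto
      ultimately show ?thesis using bdec[of "fst z ` K" "x z" "y z"] by blast
    qed
    then show "x = y" using xy unfolding FS_def by (auto intro: PiE_ext)
  next
    fix l H assume l: "l < n" and H: "H \<subseteq> {..<n} - {l}" and cH: "card H = d"
    define G where "G \<pi> j = bsz (\<pi> l) (\<pi> ` H) (\<pi> j)" for \<pi> :: "nat \<Rightarrow> nat" and j
    have permH: "\<pi> l < n" "\<pi> ` H \<subseteq> {..<n} - {\<pi> l}" "card (\<pi> ` H) = d" if "\<pi> permutes {..<n}" for \<pi>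
    proof -
      show "\<pi> l < n" using l permutes_in_image[OF that] by simp
      show "\<pi> ` H \<subseteq> {..<n} - {\<pi> l}" using H l permutes_in_image[OF that] permutes_inj[OF that]
        by (auto dest: injD)
      show "card (\<pi> ` H) = d" using cH that by (simp add: card_image permutes_inj_on)
    qed
    have Geq: "(\<Sum>\<pi>\<in>Perms n. G \<pi> j') = (\<Sum>\<pi>\<in>Perms n. G \<pi> j)" if "j \<in> H" "j' \<in> H" for j j'
    proof -
      have jn: "j < n" "j' < n" "l \<noteq> j" "l \<noteq> j'" using that H by auto
      have "G (\<pi> \<circ> transpose j j') j = G \<pi> j'" for \<pi>
      proof -
        have "(\<pi> \<circ> transpose j j') ` H = \<pi> ` (transpose j j' ` H)" by (rule image_comp[symmetric])
        also have "transpose j j' ` H = H" using that by simp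
        finally show ?thesis using jn unfolding G_def by simp
      qed
      then have "(\<Sum>\<pi>\<in>Perms n. G \<pi> j') = (\<Sum>\<pi>\<in>Perms n. G (\<pi> \<circ> transpose j j') j)" by simp
      also have "\<dots> = (\<Sum>\<pi>\<in>Perms n. G \<pi> j)"
        by (rule sum_perm_transpose[OF jn(1,2), of "\<lambda>\<pi>. G \<pi> j"])
      finally show ?thesis .
    qed
    have tot: "(\<Sum>j\<in>H. \<Sum>\<pi>\<in>Perms n. G \<pi> j) = fact (n - 1) * (\<Sum>y<n. T y)"
    proof -
      have "(\<Sum>j\<in>H. \<Sum>\<pi>\<in>Perms n. G \<pi> j) = (\<Sum>\<pi>\<in>Perms n. \<Sum>j\<in>H. G \<pi> j)" by (rule sum.swap)
      also have "\<dots> = (\<Sum>\<pi>\<in>Perms n. T (\<pi> l))"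
      proof (rule sum.cong[OF refl])
        fix \<pi> assume "\<pi> \<in> Perms n"
        then have pp: "\<pi> permutes {..<n}" by simp
        have "(\<Sum>j\<in>H. G \<pi> j) = (\<Sum>y\<in>\<pi> ` H. bsz (\<pi> l) (\<pi> ` H) y)"
          unfolding G_def using pp by (simp add: sum.reindex permutes_inj_on)
        also have "\<dots> = T (\<pi> l)" using brep2[OF permH[OF pp]] .
        finally show "(\<Sum>j\<in>H. G \<pi> j) = T (\<pi> l)" .
      qed
      also have "\<dots> = fact (n - 1) * (\<Sum>y<n. T y)" by (rule sum_perm_point[OF l])
      finally show ?thesis .
    qed
    have load: "m * (\<Sum>\<pi>\<in>Perms n. G \<pi> j) = (m * fact (n - 1) * (\<Sum>y<n. T y)) div d" if j: "j \<in> H" for j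
    proof -
      have "(\<Sum>j'\<in>H. \<Sum>\<pi>\<in>Perms n. G \<pi> j') = d * (\<Sum>\<pi>\<in>Perms n. G \<pi> j)"
        using Geq[OF j] cH by simp
      then have "d * (m * (\<Sum>\<pi>\<in>Perms n. G \<pi> j)) = m * fact (n - 1) * (\<Sum>y<n. T y)"
        using tot by (simp add: mult_ac)
      then show ?thesis using d1 by (metis nonzero_mult_div_cancel_left not_one_le_zero)
    qed
    define msg where "msg j c = (\<lambda>z\<in>I. Bmsg (fst z l) (fst z ` H) (fst z j) (c z))" for j c
    show "\<exists>msg :: nat \<Rightarrow> ((nat \<Rightarrow> nat) \<times> nat \<Rightarrow> 'c) \<Rightarrow> ((nat \<Rightarrow> nat) \<times> nat \<Rightarrow> 'm).
       (\<forall>j\<in>H. card (msg j ` E j ` FS) \<le> q ^ ((m * fact (n - 1) * (\<Sum>y<n. T y)) div d)) \<and>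
       (\<forall>x\<in>FS. \<forall>y\<in>FS. (\<forall>j\<in>H. msg j (E j x) = msg j (E j y)) \<longrightarrow> E l x = E l y)"
    proof (intro exI[of _ msg] conjI ballI impI)
      fix j assume j: "j \<in> H"
      have zp: "fst z permutes {..<n}" if "z \<in> I" for z using that unfolding I_def by auto
      have "msg j ` E j ` FS \<subseteq> PiE I (\<lambda>z. Bmsg (fst z l) (fst z ` H) (fst z j) ` BE (fst z j) ` FB)"
        unfolding msg_def E_def FS_def by (auto simp: PiE_iff)
      then have "card (msg j ` E j ` FS) \<le> card (PiE I (\<lambda>z. Bmsg (fst z l) (fst z ` H) (fst z j) ` BE (fst z j) ` FB))"
        by (rule card_mono[rotated]) (simp add: finI finFB finite_PiE)
      also have "\<dots> \<le> q ^ (\<Sum>z\<in>I. G (fst z) j)"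
      proof (rule card_PiE_le_pow[OF finI])
        fix z assume z: "z \<in> I"
        have "fst z j \<in> fst z ` H" using j by blast
        then show "card (Bmsg (fst z l) (fst z ` H) (fst z j) ` BE (fst z j) ` FB) \<le> q ^ G (fst z) j"
          unfolding G_def using brep1[OF permH[OF zp[OF z]]] by blast
      qed
      also have "(\<Sum>z\<in>I. G (fst z) j) = (m * fact (n - 1) * (\<Sum>y<n. T y)) div d"
        unfolding I_def using sum_I_fst[of "\<lambda>\<pi>. G \<pi> j"] load[OF j] by simp
      finally show "card (msg j ` E j ` FS) \<le> q ^ ((m * fact (n - 1) * (\<Sum>y<n. T y)) div d)" .
    next
      fix x y assume xy: "x \<in> FS" "y \<in> FS" and ag: "\<forall>j\<in>H. msg j (E j x) = msg j (E j y)"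
      have "BE (fst z l) (x z) = BE (fst z l) (y z)" if z: "z \<in> I" for z
      proof -
        have zp: "fst z permutes {..<n}" using z unfolding I_def by auto
        have "\<forall>j'\<in>fst z ` H. Bmsg (fst z l) (fst z ` H) j' (BE j' (x z)) = Bmsg (fst z l) (fst z ` H) j' (BE j' (y z))"
        proof
          fix j' assume "j' \<in> fst z ` H"
          then obtain j where jH: "j \<in> H" and jj: "j' = fst z j" by blast
          show "Bmsg (fst z l) (fst z ` H) j' (BE j' (x z)) = Bmsg (fst z l) (fst z ` H) j' (BE j' (y z))"
            using fun_cong[OF ag[rule_format, OF jH], of z] z jj unfolding msg_def E_def by simp
        qed
        moreover have "x z \<in> FB" "y z \<in> FB" using xy z unfolding FS_def by auto
        ultimately show ?thesis using brep3[OF permH[OF zp]] by blast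
      qed
      then show "E l x = E l y" unfolding E_def by auto
    qed
  qed
qed


locale yb =
  fixes n k d i p :: nat
  assumes k1: "1 \<le> k" and kd: "k \<le> d" and dn: "d < n" and i1: "1 \<le> i" and ik: "i \<le> k"
    and pr: "prime p" and pbig: "(n - k + i) * (d - k + 1) < p"
begin

definition "R = n - k + i"
definition "s = d - k + 1"
definition "dd = d - k + i"
definition "rr = n - k"

lemma basics: "R = i + rr" "dd + 1 = s + i" "R = dd + 1 + (rr - s)" "s \<ge> 1" "rr \<ge> 1" "s \<le> rr"
  "R \<le> n" "i \<le> dd" "dd < R" "n - R = k - i" "R * s < p" "p > 0" "dd + (k - i) = d"
  using k1 kd dn i1 ik pbig prime_gt_0_nat[OF pr] unfolding R_def s_def dd_def rr_def by auto

definition "coords = PiE {..<R} (\<lambda>_. {..<s})"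
definition "lam y u = int (y * s + u)"
definition "FB = PiE ({..<i} \<times> coords) (\<lambda>_. {..<p})"

lemma lam_dist:
  assumes "y < R" "y' < R" "u < s" "u' < s" "(y, u) \<noteq> (y', u')"
  shows "\<not> int p dvd (lam y u - lam y' u')"
proof
  assume dv: "int p dvd (lam y u - lam y' u')"
  have lt: "y * s + u < p" "y' * s + u' < p"
  proof -
    have "y * s + u < (y + 1) * s" "y' * s + u' < (y' + 1) * s" using assms by auto
    moreover have "(y + 1) * s \<le> R * s" "(y' + 1) * s \<le> R * s" using assms(1,2)
      by (intro mult_le_mono1; simp)+
    ultimately show "y * s + u < p" "y' * s + u' < p" using basics by linarith+
  qed
  have "y * s + u = y' * s + u'"
    using small_dvd_eq[OF lt] dv unfolding lam_def by simp
  then have "y = y' \<and> u = u'"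
  proof -
    assume e: "y * s + u = y' * s + u'"
    have "(y * s + u) div s = y" "(y' * s + u') div s = y'" using assms by auto
    then have "y = y'" using e by simp
    then show ?thesis using e by simp
  qed
  then show False using assms(5) by simp
qed

definition "par f a z \<longleftrightarrow> (\<forall>y\<in>{i..<R}. z y < p) \<and>
   (\<forall>t<rr. int p dvd ((\<Sum>y\<in>{i..<R}. lam y (a y) ^ t * int (z y)) + (\<Sum>y<i. lam y (a y) ^ t * int (f (y, a)))))"

lemma par_ex: assumes "a \<in> coords" shows "\<exists>z. par f a z"
proof -
  have "card {i..<R} = rr" using basics by simp
  moreover have "\<not> int p dvd (lam y (a y) - lam y' (a y'))" if "y \<in> {i..<R}" "y' \<in> {i..<R}" "y \<noteq> y'" for y y'
    using lam_dist[of y y' "a y" "a y'"] that assms unfolding coords_def by auto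
  ultimately show ?thesis unfolding par_def
    using vander_exists[of "{i..<R}" p rr "\<lambda>y. lam y (a y)" "\<lambda>t. (\<Sum>y<i. lam y (a y) ^ t * int (f (y, a)))"] pr
    by auto
qed

definition "cw f y a = (if y < i then f (y, a) else (SOME z. par f a z) y)"

lemma cw_par: "a \<in> coords \<Longrightarrow> par f a (SOME z. par f a z)"
  using par_ex by (rule someI_ex)

lemma cw_lt: assumes "f \<in> FB" "y < R" "a \<in> coords" shows "cw f y a < p"
proof (cases "y < i")
  case True then show ?thesis using assms unfolding cw_def FB_def by auto
next
  case False then show ?thesis using cw_par[OF assms(3), of f] assms unfolding cw_def par_def by auto
qed

lemma cw_eq: assumes "a \<in> coords" "t < rr"
  shows "int p dvd (\<Sum>y<R. lam y (a y) ^ t * int (cw f y a))"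
proof -
  have split: "{..<R} = {..<i} \<union> {i..<R}" using basics by auto
  have "(\<Sum>y<R. lam y (a y) ^ t * int (cw f y a)) =
     (\<Sum>y<i. lam y (a y) ^ t * int (cw f y a)) + (\<Sum>y\<in>{i..<R}. lam y (a y) ^ t * int (cw f y a))"
    unfolding split by (rule sum.union_disjoint) auto
  also have "(\<Sum>y<i. lam y (a y) ^ t * int (cw f y a)) = (\<Sum>y<i. lam y (a y) ^ t * int (f (y, a)))"
    unfolding cw_def by simp
  also have "(\<Sum>y\<in>{i..<R}. lam y (a y) ^ t * int (cw f y a)) =
      (\<Sum>y\<in>{i..<R}. lam y (a y) ^ t * int ((SOME z. par f a z) y))"
    unfolding cw_def by (rule sum.cong) auto
  finally show ?thesis using cw_par[OF assms(1), of f] assms(2) unfolding par_def by (simp add: add.commute)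
qed

lemma cw_diff: assumes "a \<in> coords" "t < rr"
  shows "int p dvd (\<Sum>y<R. lam y (a y) ^ t * (int (cw f y a) - int (cw g y a)))"
proof -
  have "int p dvd (\<Sum>y<R. lam y (a y) ^ t * int (cw f y a)) - (\<Sum>y<R. lam y (a y) ^ t * int (cw g y a))"
    using cw_eq[OF assms, of f] cw_eq[OF assms, of g] by (rule dvd_diff)
  then show ?thesis by (simp add: sum_subtractf right_diff_distrib)
qed


definition "BE y f = restrict (cw f y) (if y < R then coords else {})"
definition "asz y = (if y < R then s ^ R else 0)"
definition "coords0 l = PiE {..<R} (\<lambda>j. if j = l then {0} else {..<s})"
definition "Rsel l H = (SOME S. S \<subseteq> H \<inter> {..<R} \<and> card S = dd)"
definition "Bmsg l H y c = restrict (\<lambda>a. (\<Sum>u<s. c (a(l := u))) mod p)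
      (if l < R \<and> y \<in> Rsel l H then coords0 l else {})"
definition "bsz l H y = (if l < R \<and> y \<in> Rsel l H then s ^ (R - 1) else 0)"
definition "T l = (if l < R then dd * s ^ (R - 1) else 0)"

lemma finite_coords: "finite coords" unfolding coords_def by (simp add: finite_PiE)
lemma card_coords: "card coords = s ^ R" unfolding coords_def by (simp add: card_PiE)

lemma card_coords0: assumes "l < R" shows "card (coords0 l) = s ^ (R - 1)"
proof -
  have "card (coords0 l) = (\<Prod>j<R. card (if j = l then {0::nat} else {..<s}))"
    unfolding coords0_def by (simp add: card_PiE)
  also have "\<dots> = (\<Prod>j<R. if j = l then 1 else s)" by (rule prod.cong) auto
  also have "\<dots> = 1 * (\<Prod>j\<in>{..<R} - {l}. if j = l then 1 else s)"
    using assms by (subst prod.remove[of _ l]) auto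
  also have "\<dots> = (\<Prod>j\<in>{..<R} - {l}. s)" by simp
  also have "\<dots> = s ^ (R - 1)" using assms by simp
  finally show ?thesis .
qed

lemma finite_coords0: "finite (coords0 l)" unfolding coords0_def by (simp add: finite_PiE)

lemma coords0_upd: assumes "l < R" "a \<in> coords0 l" "u < s" shows "a(l := u) \<in> coords"
  using assms unfolding coords0_def coords_def by (auto simp: PiE_iff extensional_def split: if_splits)

lemma coords_upd0: assumes "l < R" "a \<in> coords" shows "a(l := 0) \<in> coords0 l"
  using assms unfolding coords0_def coords_def by (auto simp: PiE_iff extensional_def)

lemma finite_FB: "finite FB" unfolding FB_def using finite_coords by (simp add: finite_PiE)

lemma card_FB: "card FB = p ^ (i * s ^ R)"
  unfolding FB_def using finite_coords by (simp add: card_PiE card_cartesian_product card_coords)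

lemma bstor: "card (BE y ` FB) \<le> p ^ asz y"
proof -
  have "BE y ` FB \<subseteq> PiE (if y < R then coords else {}) (\<lambda>_. {..<p})"
    unfolding BE_def using cw_lt by (auto simp: PiE_iff)
  then have "card (BE y ` FB) \<le> card (PiE (if y < R then coords else {}) (\<lambda>_. {..<p}))"
    by (rule card_mono[rotated]) (simp add: finite_PiE finite_coords)
  also have "\<dots> = p ^ asz y" unfolding asz_def using finite_coords by (simp add: card_PiE card_coords)
  finally show ?thesis .
qed

lemma bdec:
  assumes K: "K \<subseteq> {..<n}" "card K = k" and fg: "f \<in> FB" "g \<in> FB"
    and ag: "\<forall>j\<in>K. BE j f = BE j g"
  shows "f = g"
proof -
  define K' where "K' = K \<inter> {..<R}"
  have "card K \<le> card K' + card (K - {..<R})"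
    unfolding K'_def by (metis card_Un_le Int_Diff_Un)
  moreover have "card (K - {..<R}) \<le> n - R"
  proof -
    have "K - {..<R} \<subseteq> {R..<n}" using K by auto
    then show ?thesis by (metis card_atLeastLessThan card_mono finite_atLeastLessThan)
  qed
  ultimately have cK': "card K' \<ge> i" using K basics ik by linarith
  have finK': "finite K'" unfolding K'_def by simp
  have eqall: "cw f y a = cw g y a" if a: "a \<in> coords" and y: "y < R" for a y
  proof -
    define M where "M = {..<R} - K'"
    have "card M = R - card K'" unfolding M_def K'_def by (subst card_Diff_subset) auto
    then have cM: "card M \<le> rr" using cK' basics by linarith
    have agK: "cw f y' a = cw g y' a" if "y' \<in> K'" for y'
    proof -
      have "BE y' f a = BE y' g a" using ag that unfolding K'_def by auto
      then show ?thesis using that a unfolding BE_def K'_def by auto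
    qed
    have eqM: "int p dvd (\<Sum>y\<in>M. lam y (a y) ^ t * (int (cw f y a) - int (cw g y a)))" if t: "t < rr" for t
    proof -
      have "(\<Sum>y<R. lam y (a y) ^ t * (int (cw f y a) - int (cw g y a))) =
            (\<Sum>y\<in>M. lam y (a y) ^ t * (int (cw f y a) - int (cw g y a)))"
        unfolding M_def by (rule sum.mono_neutral_right) (auto simp: agK)
      then show ?thesis using cw_diff[OF a t, of f g] by simp
    qed
    show ?thesis
    proof (cases "y \<in> K'")
      case True then show ?thesis by (rule agK)
    next
      case False
      then have yM: "y \<in> M" unfolding M_def using y by simp
      have "int p dvd (int (cw f y a) - int (cw g y a))"
      proof (rule vander_zero[where M=M and r=rr and x="\<lambda>y. lam y (a y)" and y="\<lambda>y. int (cw f y a) - int (cw g y a)" and mm=y])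
        show "finite M" unfolding M_def by simp
        show "prime (int p)" using pr by simp
        show "card M \<le> rr" by (rule cM)
        show "\<not> int p dvd lam m (a m) - lam m' (a m')" if "m \<in> M" "m' \<in> M" "m \<noteq> m'" for m m'
          using lam_dist[of m m' "a m" "a m'"] that a unfolding M_def coords_def by auto
        show "\<And>t. t < rr \<Longrightarrow> int p dvd (\<Sum>y\<in>M. lam y (a y) ^ t * (int (cw f y a) - int (cw g y a)))"
          by (rule eqM)
        show "y \<in> M" by (rule yM)
      qed
      then show ?thesis using small_dvd_eq cw_lt[OF fg(1) y a] cw_lt[OF fg(2) y a] by blast
    qed
  qed
  show ?thesis
  proof (rule PiE_ext[OF fg[unfolded FB_def]])
    fix x assume "x \<in> {..<i} \<times> coords"
    then obtain y a where x: "x = (y, a)" "y < i" "a \<in> coords" by auto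
    then have "cw f y a = cw g y a" using eqall basics by auto
    then show "f x = g x" using x unfolding cw_def by simp
  qed
qed

lemma Rsel:
  assumes l: "l < R" and H: "H \<subseteq> {..<n} - {l}" "card H = d"
  shows "Rsel l H \<subseteq> H \<inter> {..<R}" "card (Rsel l H) = dd" "l \<notin> Rsel l H" "finite (Rsel l H)"
proof -
  have "card H \<le> card (H \<inter> {..<R}) + card (H - {..<R})" by (metis card_Un_le Int_Diff_Un)
  moreover have "card (H - {..<R}) \<le> n - R"
  proof -
    have "H - {..<R} \<subseteq> {R..<n}" using H by auto
    then show ?thesis by (metis card_atLeastLessThan card_mono finite_atLeastLessThan)
  qed
  ultimately have "dd \<le> card (H \<inter> {..<R})" using H basics by linarith
  then obtain S where "S \<subseteq> H \<inter> {..<R}" "card S = dd" by (meson obtain_subset_with_card_n)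
  then have ex: "\<exists>S. S \<subseteq> H \<inter> {..<R} \<and> card S = dd" by blast
  show *: "Rsel l H \<subseteq> H \<inter> {..<R}" "card (Rsel l H) = dd"
    using someI_ex[OF ex] unfolding Rsel_def by auto
  show "l \<notin> Rsel l H" using * H by auto
  show "finite (Rsel l H)" using * by (meson finite_Int finite_lessThan finite_subset)
qed

lemma brep1: "card (Bmsg l H y ` BE y ` FB) \<le> p ^ bsz l H y"
proof -
  have "Bmsg l H y ` BE y ` FB \<subseteq> PiE (if l < R \<and> y \<in> Rsel l H then coords0 l else {}) (\<lambda>_. {..<p})"
    unfolding Bmsg_def using basics by (auto simp: PiE_iff)
  then have "card (Bmsg l H y ` BE y ` FB) \<le> card (PiE (if l < R \<and> y \<in> Rsel l H then coords0 l else {}) (\<lambda>_. {..<p}))"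
    by (rule card_mono[rotated]) (simp add: finite_coords0 finite_PiE)
  also have "\<dots> = p ^ bsz l H y"
  proof (cases "l < R \<and> y \<in> Rsel l H")
    case True then show ?thesis by (simp add: card_PiE finite_coords0 card_coords0 bsz_def)
  next
    case False
    then have c: "(l < R \<and> y \<in> Rsel l H) = False" by simp
    show ?thesis unfolding bsz_def c if_False by simp
  qed
  finally show ?thesis .
qed

lemma brep2: assumes "l < n" "H \<subseteq> {..<n} - {l}" "card H = d"
  shows "(\<Sum>y\<in>H. bsz l H y) = T l"
proof (cases "l < R")
  case True
  have fH: "finite H" using assms(2) by (meson finite_Diff finite_lessThan finite_subset)
  have "(\<Sum>y\<in>H. bsz l H y) = (\<Sum>y\<in>H. if y \<in> Rsel l H then s ^ (R - 1) else 0)"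
    unfolding bsz_def using True by simp
  also have "\<dots> = card (H \<inter> Rsel l H) * s ^ (R - 1)" using fH by (simp add: sum.If_cases)
  also have "H \<inter> Rsel l H = Rsel l H" using Rsel[OF True assms(2,3)] by auto
  finally show ?thesis using Rsel[OF True assms(2,3)] True unfolding T_def by simp
next
  case False then show ?thesis unfolding bsz_def T_def by simp
qed

lemma brep3:
  assumes l: "l < n" and H: "H \<subseteq> {..<n} - {l}" "card H = d" and fg: "f \<in> FB" "g \<in> FB"
    and ag: "\<forall>j\<in>H. Bmsg l H j (BE j f) = Bmsg l H j (BE j g)"
  shows "BE l f = BE l g"
proof (cases "l < R")
  case False then show ?thesis unfolding BE_def restrict_def by simp
next
  case True
  define Rs where "Rs = Rsel l H"
  have RS: "Rs \<subseteq> H \<inter> {..<R}" "card Rs = dd" "l \<notin> Rs" "finite Rs"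
    using Rsel[OF True H] unfolding Rs_def by auto
  define U where "U = {..<R} - {l} - Rs"
  have finU: "finite U" unfolding U_def by simp
  have RU: "{..<R} - {l} = Rs \<union> U" "Rs \<inter> U = {}" using RS unfolding U_def by auto
  have cU: "card U = rr - s"
  proof -
    have "card ({..<R} - {l}) = R - 1" using True by simp
    moreover have "card ({..<R} - {l}) = card Rs + card U" using RU RS finU by (metis card_Un_disjoint)
    ultimately show ?thesis using RS basics by linarith
  qed
  define \<delta> where "\<delta> y b = int (cw f y b) - int (cw g y b)" for y b
  have msgeq: "int p dvd (\<Sum>u<s. \<delta> y (a(l := u)))" if y: "y \<in> Rs" and a: "a \<in> coords0 l" for y a
  proof -
    have yH: "y \<in> H" and yR: "y < R" using y RS by auto
    have cond: "l < R \<and> y \<in> Rsel l H" using True y unfolding Rs_def by simp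
    have "Bmsg l H y (BE y f) a = Bmsg l H y (BE y g) a" using ag yH by simp
    moreover have "Bmsg l H y (BE y h) a = (\<Sum>u<s. cw h y (a(l := u))) mod p" for h
    proof -
      have "Bmsg l H y (BE y h) a = (\<Sum>u<s. BE y h (a(l := u))) mod p"
        unfolding Bmsg_def using cond a by simp
      also have "(\<Sum>u<s. BE y h (a(l := u))) = (\<Sum>u<s. cw h y (a(l := u)))"
        by (rule sum.cong) (use coords0_upd[OF True a] yR in \<open>auto simp: BE_def\<close>)
      finally show ?thesis .
    qed
    ultimately have "(\<Sum>u<s. cw f y (a(l := u))) mod p = (\<Sum>u<s. cw g y (a(l := u))) mod p" by simp
    then have "int (\<Sum>u<s. cw f y (a(l := u))) mod int p = int (\<Sum>u<s. cw g y (a(l := u))) mod int p"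
      by (metis of_nat_mod)
    then have "int p dvd int (\<Sum>u<s. cw f y (a(l := u))) - int (\<Sum>u<s. cw g y (a(l := u)))"
      by (simp add: mod_eq_dvd_iff)
    then show ?thesis unfolding \<delta>_def by (simp add: sum_subtractf)
  qed
  have key: "int p dvd \<delta> l a'" if a': "a' \<in> coords" for a'
  proof -
    define a where "a = a'(l := 0)"
    have a0: "a \<in> coords0 l" unfolding a_def by (rule coords_upd0[OF True a'])
    have aup: "a(l := u) \<in> coords" if "u < s" for u using coords0_upd[OF True a0 that] .
    have ay: "a y < s" if "y < R" "y \<noteq> l" for y
    proof -
      have "a y \<in> (if y = l then {0} else {..<s})"
        using PiE_mem[OF a0[unfolded coords0_def], of y] that(1) by simp
      then show ?thesis using that(2) by simp
    qed
    have eqs: "int p dvd ((\<Sum>u<s. lam l u ^ t * \<delta> l (a(l := u))) +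
                 (\<Sum>y\<in>U. lam y (a y) ^ t * (\<Sum>u<s. \<delta> y (a(l := u)))))" if t: "t < rr" for t
    proof -
      define F where "F u y = lam y ((a(l := u)) y) ^ t * \<delta> y (a(l := u))" for u y
      have d1: "int p dvd (\<Sum>u<s. \<Sum>y<R. F u y)"
      proof (rule dvd_sum)
        fix u assume "u \<in> {..<s}"
        then show "int p dvd (\<Sum>y<R. F u y)" using cw_diff[OF aup t, of u f g] unfolding F_def \<delta>_def by simp
      qed
      have "(\<Sum>u<s. \<Sum>y<R. F u y) = (\<Sum>y<R. \<Sum>u<s. F u y)" by (rule sum.swap)
      also have "\<dots> = (\<Sum>u<s. F u l) + (\<Sum>y\<in>{..<R} - {l}. \<Sum>u<s. F u y)"
        using True by (subst sum.remove[of _ l]) auto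
      also have "(\<Sum>y\<in>{..<R} - {l}. \<Sum>u<s. F u y) = (\<Sum>y\<in>Rs. \<Sum>u<s. F u y) + (\<Sum>y\<in>U. \<Sum>u<s. F u y)"
        unfolding RU(1) using RS(4) finU RU(2) by (rule sum.union_disjoint)
      finally have e1: "(\<Sum>u<s. \<Sum>y<R. F u y) = (\<Sum>u<s. F u l) + ((\<Sum>y\<in>Rs. \<Sum>u<s. F u y) + (\<Sum>y\<in>U. \<Sum>u<s. F u y))" .
      have Fo: "(\<Sum>u<s. F u y) = lam y (a y) ^ t * (\<Sum>u<s. \<delta> y (a(l := u)))" if "y \<noteq> l" for y
        unfolding F_def using that by (simp add: sum_distrib_left)
      have Fl: "(\<Sum>u<s. F u l) = (\<Sum>u<s. lam l u ^ t * \<delta> l (a(l := u)))" unfolding F_def by simp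
      have d2: "int p dvd (\<Sum>y\<in>Rs. \<Sum>u<s. F u y)"
      proof (rule dvd_sum)
        fix y assume y: "y \<in> Rs"
        then have "y \<noteq> l" using RS by auto
        then show "int p dvd (\<Sum>u<s. F u y)" unfolding Fo[OF \<open>y \<noteq> l\<close>] using msgeq[OF y a0] by simp
      qed
      have e2: "(\<Sum>y\<in>U. \<Sum>u<s. F u y) = (\<Sum>y\<in>U. lam y (a y) ^ t * (\<Sum>u<s. \<delta> y (a(l := u))))"
        by (rule sum.cong) (auto simp: U_def Fo)
      have "int p dvd ((\<Sum>u<s. F u l) + (\<Sum>y\<in>U. \<Sum>u<s. F u y)) + (\<Sum>y\<in>Rs. \<Sum>u<s. F u y)"
        using d1 e1 by (simp add: ac_simps)
      then have "int p dvd ((\<Sum>u<s. F u l) + (\<Sum>y\<in>U. \<Sum>u<s. F u y))"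
        using d2 by (simp add: dvd_add_left_iff)
      then show ?thesis using Fl e2 by simp
    qed
    define M where "M = {..<s} <+> U"
    define w where "w = case_sum (\<lambda>u. lam l u) (\<lambda>y. lam y (a y))"
    define v where "v = case_sum (\<lambda>u. \<delta> l (a(l := u))) (\<lambda>y. \<Sum>u<s. \<delta> y (a(l := u)))"
    have sumM: "(\<Sum>m\<in>M. w m ^ t * v m) = (\<Sum>u<s. lam l u ^ t * \<delta> l (a(l := u))) +
                 (\<Sum>y\<in>U. lam y (a y) ^ t * (\<Sum>u<s. \<delta> y (a(l := u))))" for t
      unfolding M_def using finU by (simp add: sum.Plus w_def v_def)
    have al: "a' l < s" using a' True unfolding coords_def by auto
    have "int p dvd v (Inl (a' l))"
    proof (rule vander_zero[where M=M and r=rr and x=w and y=v and mm="Inl (a' l)"])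
      show "finite M" unfolding M_def using finU by simp
      show "prime (int p)" using pr by simp
      show "card M \<le> rr" unfolding M_def using finU cU basics by (simp add: card_Plus)
      show "\<And>t. t < rr \<Longrightarrow> int p dvd (\<Sum>m\<in>M. w m ^ t * v m)" using eqs sumM by simp
      show "Inl (a' l) \<in> M" unfolding M_def using al by (simp add: InlI)
      show "\<not> int p dvd w m - w m'" if m: "m \<in> M" "m' \<in> M" "m \<noteq> m'" for m m'
      proof -
        have UR: "y < R" "y \<noteq> l" if "y \<in> U" for y using that unfolding U_def by auto
        show ?thesis
        proof (cases m)
          case (Inl u)
          show ?thesis
          proof (cases m')
            case (Inl u')
            then show ?thesis using \<open>m = Inl u\<close> m lam_dist[of l l u u'] True unfolding M_def w_def by auto
          next
            case (Inr y')
            then show ?thesis using \<open>m = Inl u\<close> m lam_dist[of l y' u "a y'"] True UR ay unfolding M_def w_def by auto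
          qed
        next
          case (Inr y)
          show ?thesis
          proof (cases m')
            case (Inl u')
            then show ?thesis using \<open>m = Inr y\<close> m lam_dist[of y l "a y" u'] True UR ay unfolding M_def w_def by auto
          next
            case (Inr y')
            then show ?thesis using \<open>m = Inr y\<close> m lam_dist[of y y' "a y" "a y'"] UR ay unfolding M_def w_def by auto
          qed
        qed
      qed
    qed
    moreover have "a(l := a' l) = a'" unfolding a_def by simp
    ultimately show ?thesis unfolding v_def by simp
  qed
  show ?thesis
  proof -
    have "cw f l a' = cw g l a'" if "a' \<in> coords" for a'
      using small_dvd_eq[OF cw_lt[OF fg(1) True that] cw_lt[OF fg(2) True that]] key[OF that]
      unfolding \<delta>_def by blast
    then show ?thesis unfolding BE_def using True by auto
  qed
qed
end


context yb begin

lemma sum_if_lt: "R \<le> n \<Longrightarrow> (\<Sum>y<n. if y < R then c else 0) = R * (c::nat)"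
proof -
  assume Rn: "R \<le> n"
  have "(\<Sum>y<n. if y < R then c else 0) = (\<Sum>y<R. if y < R then c else 0)"
    using Rn by (intro sum.mono_neutral_right) auto
  also have "\<dots> = R * c" by simp
  finally show ?thesis .
qed

lemma code_exists:
  "\<exists>enc. exact_dss n k d p (m * fact n * (i * s ^ R)) (m * fact (n - 1) * (R * s ^ R))
      ((m * fact (n - 1) * (R * (dd * s ^ (R - 1)))) div d) enc"
proof -
  have A: "(\<Sum>y<n. asz y) = R * s ^ R" unfolding asz_def by (rule sum_if_lt[OF basics(7)])
  have B: "(\<Sum>y<n. T y) = R * (dd * s ^ (R - 1))" unfolding T_def by (rule sum_if_lt[OF basics(7)])
  have "\<exists>enc. exact_dss n k d p (m * fact n * (i * s ^ R)) (m * fact (n - 1) * (\<Sum>y<n. asz y))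
            ((m * fact (n - 1) * (\<Sum>y<n. T y)) div d) enc"
  proof (rule symm[where FB=FB and BE=BE and Bmsg=Bmsg and bsz=bsz])
    show "1 \<le> p" using basics by simp
    show "1 \<le> d" using k1 kd by simp
    show "finite FB" by (rule finite_FB)
    show "p ^ (i * s ^ R) \<le> card FB" by (simp add: card_FB)
    show "\<And>y. y < n \<Longrightarrow> card (BE y ` FB) \<le> p ^ asz y" by (rule bstor)
    show "\<And>K x y. K \<subseteq> {..<n} \<Longrightarrow> card K = k \<Longrightarrow> x \<in> FB \<Longrightarrow> y \<in> FB \<Longrightarrow> \<forall>j\<in>K. BE j x = BE j y \<Longrightarrow> x = y"
      by (rule bdec)
    show "\<And>l H j. l < n \<Longrightarrow> H \<subseteq> {..<n} - {l} \<Longrightarrow> card H = d \<Longrightarrow> j \<in> H \<Longrightarrow>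
                 card (Bmsg l H j ` BE j ` FB) \<le> p ^ bsz l H j" by (rule brep1)
    show "\<And>l H. l < n \<Longrightarrow> H \<subseteq> {..<n} - {l} \<Longrightarrow> card H = d \<Longrightarrow> (\<Sum>j\<in>H. bsz l H j) = T l"
      by (rule brep2)
    show "\<And>l H x y. l < n \<Longrightarrow> H \<subseteq> {..<n} - {l} \<Longrightarrow> card H = d \<Longrightarrow> x \<in> FB \<Longrightarrow> y \<in> FB \<Longrightarrow>
                 \<forall>j\<in>H. Bmsg l H j (BE j x) = Bmsg l H j (BE j y) \<Longrightarrow> BE l x = BE l y"
      by (rule brep3)
  qed
  then show ?thesis unfolding A B .
qed

end

lemma approx:
  fixes X A0 \<alpha> \<epsilon> m L :: real
  assumes X: "X > 0" and A0: "A0 > 0" and al: "\<alpha> > 0" and ep: "\<epsilon> > 0" and m0: "m > 0"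
    and mbig: "m > X * \<alpha>^2 / (A0^2 * \<epsilon>)" and L0: "0 < L" and Lle: "L \<le> m * A0 / \<alpha> + 1"
  shows "X * \<alpha> / A0 \<le> m * X / L + \<epsilon>"
proof -
  have Lle': "L \<le> (m * A0 + \<alpha>) / \<alpha>" using Lle al by (simp add: field_simps)
  have pos: "0 < m * A0 + \<alpha>" using m0 A0 al by (simp add: add_pos_pos)
  have h1: "m * X / ((m * A0 + \<alpha>) / \<alpha>) \<le> m * X / L"
    by (rule divide_left_mono[OF Lle']) (use m0 X L0 pos al in auto)
  have h1': "m * X / ((m * A0 + \<alpha>) / \<alpha>) = m * X * \<alpha> / (m * A0 + \<alpha>)" using al pos by (simp add: field_simps)
  have h2: "X * \<alpha> / A0 - m * X * \<alpha> / (m * A0 + \<alpha>) = X * \<alpha>^2 / (A0 * (m * A0 + \<alpha>))"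
    using A0 pos by (simp add: field_simps power2_eq_square)
  have h3: "X * \<alpha>^2 / (A0 * (m * A0 + \<alpha>)) \<le> X * \<alpha>^2 / (A0 * (m * A0))"
    by (rule divide_left_mono) (use X al A0 m0 pos in \<open>auto intro!: mult_pos_pos\<close>)
  have "X * \<alpha>^2 < m * (A0^2 * \<epsilon>)" using mbig A0 ep by (simp add: field_simps)
  then have h4: "X * \<alpha>^2 / (A0 * (m * A0)) < \<epsilon>" using A0 m0 by (simp add: field_simps power2_eq_square)
  show ?thesis using h1 h1' h2 h3 h4 by linarith
qed

theorem theorem3p2:
  fixes n k d i :: nat and \<alpha> :: real
  assumes "1 \<le> k" and "k \<le> d" and "d < n" and "\<alpha> > 0"
    and "1 \<le> i" and "i \<le> k"
  shows "ereal (real n * real i * \<alpha> / (real n - real k + real i))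
     \<le> C_exact n k d \<alpha> ((real d - real k + real i) * \<alpha> / (real d - real k + 1))"
proof -
  obtain p where pr: "prime p" and pb: "p > (n - k + i) * (d - k + 1)" using bigger_prime by blast
  interpret yb n k d i p using assms pr pb by unfold_locales auto
  have R1: "R \<ge> 1" using basics by simp
  define X where "X = real (fact n * (i * s ^ R))"
  define A0 where "A0 = real (fact (n - 1) * (R * s ^ R))"
  define Tot where "Tot = fact (n - 1) * (R * (dd * s ^ (R - 1)))"
  have s0: "s > 0" using basics by simp
  have X0: "X > 0" unfolding X_def using assms s0 by simp
  have A00: "A0 > 0" unfolding A0_def using R1 s0 by simp
  have factn: "fact n = n * fact (n - 1)" using assms by (metis Suc_pred' fact_Suc gr_implies_not0 neq0_conv of_nat_id)
  have rR: "real n - real k + real i = real R" unfolding R_def using assms by simp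
  have tgt: "real n * real i * \<alpha> / (real n - real k + real i) = X * \<alpha> / A0"
  proof -
    have "X * real R = A0 * (real n * real i)"
      unfolding X_def A0_def factn by (simp add: mult_ac)
    then show ?thesis unfolding rR using A00 R1 by (simp add: field_simps)
  qed
  have gam: "(real d - real k + real i) * \<alpha> / (real d - real k + 1) = real dd * \<alpha> / real s"
  proof -
    have e: "real (d - k) = real d - real k" using assms by (simp add: of_nat_diff)
    have "real dd = real d - real k + real i" unfolding dd_def using e by simp
    moreover have "real s = real d - real k + 1" unfolding s_def using e by simp
    ultimately show ?thesis by simp
  qed
  have TotA: "real Tot * real s = A0 * real dd"
  proof -
    have e: "Suc (R - 1) = R" using R1 by simp
    have ps: "s ^ (R - 1) * s = s ^ R" by (metis e power_Suc2)
    have "Tot * s = fact (n - 1) * R * dd * (s ^ (R - 1) * s)" unfolding Tot_def by (simp add: ac_simps)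
    also have "\<dots> = fact (n - 1) * R * dd * s ^ R" by (simp only: ps)
    also have "\<dots> = fact (n - 1) * (R * s ^ R) * dd" by (simp add: ac_simps)
    finally have "Tot * s = fact (n - 1) * (R * s ^ R) * dd" .
    then show ?thesis unfolding A0_def by (metis of_nat_mult)
  qed
  show ?thesis unfolding tgt gam
  proof (rule ereal_le_epsilon2)
    fix \<epsilon> :: real assume ep: "0 < \<epsilon>"
    define m :: nat where "m = nat \<lceil>X * \<alpha>^2 / (A0^2 * \<epsilon>)\<rceil> + 1"
    have mbig: "real m > X * \<alpha>^2 / (A0^2 * \<epsilon>)" unfolding m_def by linarith
    have m1: "m \<ge> 1" unfolding m_def by simp
    define L :: nat where "L = nat \<lceil>real m * A0 / \<alpha>\<rceil>"
    have mpos: "real m * A0 / \<alpha> > 0" using m1 A00 assms by simp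
    have Lge: "real L \<ge> real m * A0 / \<alpha>" unfolding L_def by linarith
    have Lle: "real L \<le> real m * A0 / \<alpha> + 1" unfolding L_def using mpos by linarith
    have L1: "L \<ge> 1" using Lge mpos by linarith
    have aL: "real (m * fact (n - 1) * (R * s ^ R)) \<le> \<alpha> * real L"
    proof -
      have "real (m * fact (n - 1) * (R * s ^ R)) = real m * A0" unfolding A0_def by simp
      also have "\<dots> \<le> \<alpha> * real L" using Lge assms by (simp add: field_simps)
      finally show ?thesis .
    qed
    have bL: "real d * real ((m * Tot) div d) \<le> real dd * \<alpha> / real s * real L"
    proof -
      have "d * ((m * Tot) div d) \<le> m * Tot" by (rule times_div_less_eq_dividend)
      then have "real d * real ((m * Tot) div d) \<le> real m * real Tot" by (metis of_nat_le_iff of_nat_mult)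
      also have "real m * real Tot = real m * A0 * real dd / real s" using TotA s0 by (simp add: field_simps)
      also have "\<dots> \<le> \<alpha> * real L * real dd / real s"
        using Lge assms s0 by (intro divide_right_mono mult_right_mono) (auto simp: field_simps)
      finally show ?thesis by (simp add: field_simps)
    qed
    obtain enc where enc: "exact_dss n k d p (m * fact n * (i * s ^ R)) (m * fact (n - 1) * (R * s ^ R))
      ((m * fact (n - 1) * (R * (dd * s ^ (R - 1)))) div d) enc" using code_exists by blast
    have mem: "ereal (real (m * fact n * (i * s ^ R)) / real L) \<in> {ereal (real B / real L) | B L q a b enc.
      L \<ge> 1 \<and> (\<exists>p m. prime p \<and> m \<ge> 1 \<and> q = p ^ m) \<and>
      real a \<le> \<alpha> * real L \<and> real d * real b \<le> real dd * \<alpha> / real s * real L \<and>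
      exact_dss n k d q B a b enc}"
    proof -
      have "\<exists>p' m'. prime p' \<and> m' \<ge> (1::nat) \<and> p = p' ^ m'" using pr by (intro exI[of _ p] exI[of _ 1]) simp
      then have pp: "\<exists>p' m'. prime p' \<and> m' \<ge> (1::nat) \<and> p = p' ^ m'" .
      have eqT: "m * fact (n - 1) * (R * (dd * s ^ (R - 1))) = m * Tot" unfolding Tot_def by (simp only: mult.assoc)
      have enc': "exact_dss n k d p (m * fact n * (i * s ^ R)) (m * fact (n - 1) * (R * s ^ R)) ((m * Tot) div d) enc"
        using enc unfolding eqT .
      show ?thesis
        apply (simp only: mem_Collect_eq)
        apply (rule exI[of _ "m * fact n * (i * s ^ R)"], rule exI[of _ L], rule exI[of _ p],
               rule exI[of _ "m * fact (n - 1) * (R * s ^ R)"], rule exI[of _ "(m * Tot) div d"], rule exI[of _ enc])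
        using L1 aL bL enc' pp by blast
    qed
    have up: "ereal (real (m * fact n * (i * s ^ R)) / real L) \<le> C_exact n k d \<alpha> (real dd * \<alpha> / real s)"
      unfolding C_exact_def by (rule Sup_upper[OF mem])
    have "X * \<alpha> / A0 \<le> real m * X / real L + \<epsilon>"
      by (rule approx[OF X0 A00 assms(4) ep _ mbig _ Lle]) (use m1 L1 in auto)
    also have "real m * X / real L = real (m * fact n * (i * s ^ R)) / real L" unfolding X_def by simp
    finally have "ereal (X * \<alpha> / A0) \<le> ereal (real (m * fact n * (i * s ^ R)) / real L) + ereal \<epsilon>"
      by simp
    also have "\<dots> \<le> C_exact n k d \<alpha> (real dd * \<alpha> / real s) + ereal \<epsilon>"
      using up by (rule add_right_mono)
    finally show "ereal (X * \<alpha> / A0) \<le> C_exact n k d \<alpha> (real dd * \<alpha> / real s) + ereal \<epsilon>" .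
  qed
qed

end
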